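(* Let $\mathcal{C}$ be a finite or countable alphabet with letter probabilities $(p_\alpha)_{\alpha\in\mathcal{C}}$, $0<p_\alpha<1$, $\sum_\alpha p_\alpha=1$, and let $\mathbb{P}$ be the product measure on $\mathcal{C}^{\mathbb{N}}$ with these identically distributed marginals. View each $S_n$ as a random variable on $\mathcal{C}^{\mathbb{N}}$ via $S_n(x)=S_n(x_1^n)$. Then there is no random variable $S$ on $\mathcal{C}^{\mathbb{N}}$ such that $S_n$ converges in probability to $S$.
   Context: $x_a^b=(x_a,\dots,x_b)$. The first return is $T_n(x_1^n)=\min\{j\ge1: x_1^{n-j}=x_{j+1}^n\}$ ($T_n=n$ if the set is empty), and $S_n=n-T_n$. *)

theory Defs
  imports "HOL-Probability.Probability"
begin

text \<open>Sequences x_1, x_2, ... are represented 0-based: x_k is x (k - 1).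
  First return T_n(x_1^n) = min {j >= 1. x_1^{n-j} = x_{j+1}^n}, and T_n = n if the
  set of j in 1..n-1 with this property is empty (j >= n always qualifies vacuously,
  so this agrees with the paper's convention).\<close>

definition first_return :: "nat \<Rightarrow> (nat \<Rightarrow> 'a) \<Rightarrow> nat" where
  "first_return n x =
     (let J = {j. 1 \<le> j \<and> j < n \<and> (\<forall>i<n - j. x i = x (i + j))}
      in if J = {} then n else Min J)"

definition S_stat :: "nat \<Rightarrow> (nat \<Rightarrow> 'a) \<Rightarrow> nat" where
  "S_stat n x = n - first_return n x"

definition conv_in_prob :: "'b measure \<Rightarrow> (nat \<Rightarrow> 'b \<Rightarrow> real) \<Rightarrow> ('b \<Rightarrow> real) \<Rightarrow> bool" where
  "conv_in_prob M X Y \<longleftrightarrow>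
     (\<forall>e>0. (\<lambda>n. measure M {x \<in> space M. e < \<bar>X n x - Y x\<bar>}) \<longlonglongrightarrow> 0)"

end

theory Submission
  imports Defs
begin

lemma first_return_cong:
  assumes "\<And>i. i < n \<Longrightarrow> x i = y i"
  shows "first_return n x = first_return n y"
proof -
  have "{j. 1 \<le> j \<and> j < n \<and> (\<forall>i<n - j. x i = x (i + j))}
      = {j. 1 \<le> j \<and> j < n \<and> (\<forall>i<n - j. y i = y (i + j))}"
    using assms by (auto simp: less_diff_conv)
  then show ?thesis unfolding first_return_def by simp
qed

lemma S_stat_neq:
  assumes n: "2 \<le> n" and x0: "x 0 = a" and xn1: "x (n - 1) = a" and xn: "x n = b"
    and ab: "a \<noteq> b"
  shows "S_stat n x \<noteq> S_stat (Suc n) x"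
proof
  assume eq: "S_stat n x = S_stat (Suc n) x"
  define J where "J = {j. 1 \<le> j \<and> j < n \<and> (\<forall>i<n - j. x i = x (i + j))}"
  define J' where "J' = {j. 1 \<le> j \<and> j < Suc n \<and> (\<forall>i<Suc n - j. x i = x (i + j))}"
  have "n - 1 \<in> J" using n x0 xn1 unfolding J_def by auto
  hence Jne: "J \<noteq> {}" by auto
  have finJ: "finite J" unfolding J_def by auto
  have finJ': "finite J'" unfolding J'_def by auto
  define j where "j = Min J"
  have jJ: "j \<in> J" using Jne finJ j_def by simp
  have fr: "first_return n x = j" using Jne unfolding first_return_def J_def[symmetric] j_def by simp
  have j1: "1 \<le> j" "j < n" using jJ by (auto simp: J_def)
  have s: "S_stat n x = n - j" using fr by (simp add: S_stat_def)
  have J'ne: "J' \<noteq> {}"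
  proof
    assume "J' = {}"
    hence "first_return (Suc n) x = Suc n" unfolding first_return_def J'_def[symmetric] by simp
    hence "S_stat (Suc n) x = 0" by (simp add: S_stat_def)
    thus False using eq s j1 by simp
  qed
  have "first_return (Suc n) x = Min J'" using J'ne unfolding first_return_def J'_def[symmetric] by simp
  moreover have "Min J' \<in> J'" using J'ne finJ' by simp
  ultimately have fr'J: "first_return (Suc n) x \<in> J'" by simp
  have "first_return (Suc n) x \<le> Suc n" using fr'J by (auto simp: J'_def)
  hence fr': "first_return (Suc n) x = Suc j" using eq s j1 by (simp add: S_stat_def)
  have A: "x (n - j - 1) = x (n - j - 1 + Suc j)" using fr'J fr' j1 by (auto simp: J'_def)
  have B: "x (n - j - 1) = x (n - j - 1 + j)" using jJ j1 by (auto simp: J_def)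
  have "n - j - 1 + Suc j = n" "n - j - 1 + j = n - 1" using j1 by auto
  thus False using A B xn xn1 ab by simp
qed


lemma map_prefix_measurable:
  fixes P :: "'a::countable pmf"
  shows "(\<lambda>x. map x [0..<n]) \<in> PiM UNIV (\<lambda>_::nat. measure_pmf P) \<rightarrow>\<^sub>M count_space UNIV"
proof -
  let ?M = "PiM UNIV (\<lambda>_::nat. measure_pmf P)"
  have comp: "{x \<in> space ?M. x i = c} \<in> sets ?M" for i c
  proof -
    have "(\<lambda>x. x i) \<in> ?M \<rightarrow>\<^sub>M measure_pmf P" by (rule measurable_component_singleton) simp
    hence "(\<lambda>x. x i) -` {c} \<inter> space ?M \<in> sets ?M" by (rule measurable_sets) simp
    moreover have "(\<lambda>x. x i) -` {c} \<inter> space ?M = {x \<in> space ?M. x i = c}" by auto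
    ultimately show ?thesis by simp
  qed
  have "(\<lambda>x. map x [0..<n]) -` {l} \<inter> space ?M \<in> sets ?M" for l :: "'a list"
  proof (cases "length l = n")
    case True
    have "(\<lambda>x. map x [0..<n]) -` {l} \<inter> space ?M = space ?M \<inter> (\<Inter>i\<in>{..<n}. {x \<in> space ?M. x i = l ! i})"
      proof -
        have "map x [0..<n] = l \<longleftrightarrow> (\<forall>i\<in>{..<n}. x i = l ! i)" for x :: "nat \<Rightarrow> 'a"
          using True by (auto simp: list_eq_iff_nth_eq)
        thus ?thesis by blast
      qed
    also have "\<dots> \<in> sets ?M"
    proof (cases "n = 0")
      case True thus ?thesis by simp
    next
      case False
      have "(\<Inter>i\<in>{..<n}. {x \<in> space ?M. x i = l ! i}) \<in> sets ?M"
        using False comp by (intro sets.finite_INT) auto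
      thus ?thesis by (rule sets.Int[OF sets.top])
    qed
    finally show ?thesis .
  next
    case False
    hence "(\<lambda>x. map x [0..<n]) -` {l} \<inter> space ?M = {}" by auto
    thus ?thesis by simp
  qed
  thus ?thesis by (subst measurable_count_space_eq2_countable) auto
qed

lemma S_stat_measurable:
  fixes P :: "'a::countable pmf"
  shows "(\<lambda>x. real (S_stat n x)) \<in> borel_measurable (PiM UNIV (\<lambda>_::nat. measure_pmf P))"
proof -
  define h where "h = (\<lambda>l::'a list. real (S_stat n (\<lambda>i. l ! i)))"
  have eq: "(\<lambda>x. real (S_stat n x)) = (\<lambda>x. h (map x [0..<n]))"
  proof
    fix x :: "nat \<Rightarrow> 'a"
    have "first_return n x = first_return n (\<lambda>i. map x [0..<n] ! i)"
      by (rule first_return_cong) simp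
    thus "real (S_stat n x) = h (map x [0..<n])" by (simp add: h_def S_stat_def)
  qed
  show ?thesis unfolding eq
    by (rule measurable_compose[OF map_prefix_measurable]) simp
qed

theorem proposition3:
  fixes P :: "'a::countable pmf"
  assumes "\<And>a. 0 < pmf P a" and "\<And>a. pmf P a < 1"
  shows "\<not> (\<exists>S \<in> borel_measurable (PiM UNIV (\<lambda>_::nat. measure_pmf P)).
              conv_in_prob (PiM UNIV (\<lambda>_::nat. measure_pmf P))
                (\<lambda>n x. real (S_stat n x)) S)"
proof
  let ?M = "PiM UNIV (\<lambda>_::nat. measure_pmf P)"
  assume "\<exists>S \<in> borel_measurable ?M. conv_in_prob ?M (\<lambda>n x. real (S_stat n x)) S"
  then obtain S where Sm: "S \<in> borel_measurable ?M"
    and conv: "conv_in_prob ?M (\<lambda>n x. real (S_stat n x)) S" by blast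
  interpret PS: prob_space ?M by (rule prob_space_PiM) (simp add: measure_pmf.prob_space_axioms)
  obtain a :: 'a where True by simp
  have "\<exists>b. a \<noteq> b"
  proof (rule ccontr)
    assume "\<not> (\<exists>b. a \<noteq> b)"
    hence "UNIV = {a}" by auto
    have "pmf P a = measure (measure_pmf P) {a}" by (simp add: measure_pmf_single)
    also have "\<dots> = measure (measure_pmf P) UNIV" using \<open>UNIV = {a}\<close> by simp
    also have "\<dots> = 1" using measure_pmf.prob_space[of P] by simp
    finally show False using assms(2)[of a] by simp
  qed
  then obtain b where ab: "a \<noteq> b" by blast
  define c where "c = pmf P a * pmf P a * pmf P b"
  have cpos: "0 < c" unfolding c_def using assms(1) by simp
  define A where "A n = {x \<in> space ?M. 1/4 < \<bar>real (S_stat n x) - S x\<bar>}" for n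
  have Ameas: "A n \<in> sets ?M" for n
    unfolding A_def using S_stat_measurable[of n P] Sm by measurable
  have lim: "(\<lambda>n. measure ?M (A n)) \<longlonglongrightarrow> 0"
    using conv unfolding conv_in_prob_def A_def by (erule_tac x="1/4" in allE) simp
  hence lim2: "(\<lambda>n. measure ?M (A n) + measure ?M (A (Suc n))) \<longlonglongrightarrow> 0 + 0"
    using LIMSEQ_Suc[OF lim] by (intro tendsto_add)
  have bound: "c \<le> measure ?M (A n) + measure ?M (A (Suc n))" if n: "2 \<le> n" for n
  proof -
    define J where "J = {0, n - 1, n}"
    define X where "X = (\<lambda>i. if i = n then {b} else {a})"
    define F where "F = prod_emb UNIV (\<lambda>_::nat. measure_pmf P) J (Pi\<^sub>E J X)"
    have Feq: "F = {x. x 0 = a \<and> x (n - 1) = a \<and> x n = b}"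
      using n by (auto simp: F_def prod_emb_def J_def X_def space_PiM PiE_iff split: if_splits)
    have "emeasure ?M F = (\<Prod>i\<in>J. emeasure (measure_pmf P) (X i))"
      unfolding F_def
      by (rule emeasure_PiM_emb) (auto simp: J_def measure_pmf.prob_space_axioms)
    also have "\<dots> = ennreal c"
      using n by (auto simp add: J_def X_def emeasure_pmf_single c_def ennreal_mult pmf_nonneg mult.assoc)
    finally have mF: "measure ?M F = c"
      using cpos by (simp add: measure_def)
    have Fsub: "F \<subseteq> A n \<union> A (Suc n)"
    proof
      fix x assume "x \<in> F"
      hence "S_stat n x \<noteq> S_stat (Suc n) x"
        using Feq ab n by (intro S_stat_neq[of n x a b]) auto
      hence "1 \<le> \<bar>real (S_stat n x) - real (S_stat (Suc n) x)\<bar>" by linarith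
      hence "1/4 < \<bar>real (S_stat n x) - S x\<bar> \<or> 1/4 < \<bar>real (S_stat (Suc n) x) - S x\<bar>" by linarith
      thus "x \<in> A n \<union> A (Suc n)" by (auto simp: A_def space_PiM)
    qed
    have "measure ?M F \<le> measure ?M (A n \<union> A (Suc n))"
      using Fsub Ameas by (intro PS.finite_measure_mono) auto
    also have "\<dots> \<le> measure ?M (A n) + measure ?M (A (Suc n))"
      using Ameas by (intro measure_Un_le) auto
    finally show ?thesis using mF by simp
  qed
  have "c \<le> 0 + 0"
    by (rule tendsto_lowerbound[OF lim2]) (auto intro!: eventually_sequentiallyI[of 2] bound)
  thus False using cpos by simp
qed

end
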